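(* Let $f_0,f_1:\mathbb{R}\to\mathbb{R}$ be functions such that the restrictions $f_0|_{[0,1/3]}:[0,1/3]\to[0,1]$ and $f_1|_{[2/3,1]}:[2/3,1]\to[0,1]$ are bijective, $|f_0(x)|\ge 1$ for every $x\in(-\infty,0]\cup[2/3,\infty)$, and $|f_1(x)|\ge 1$ for every $x\in(-\infty,1/3]\cup[1,\infty)$. For $\sigma=\sigma_1\sigma_2\cdots\sigma_n\in\{0,1\}^n$ let $f_\sigma=f_{\sigma_n}\circ\cdots\circ f_{\sigma_2}\circ f_{\sigma_1}$. Then for every $n\ge 1$ there is a function $\alpha_n:\{0,1\}^n\to(0,1)$ such that: (i) $\alpha_n(\sigma)\in[0,1/3]$ if $\sigma_1=0$; (ii) $\alpha_n(\sigma)\in[2/3,1]$ if $\sigma_1=1$; (iii) for all $\sigma,\tau\in\{0,1\}^n$, $\alpha_n(\sigma)=\alpha_n(\tau)$ iff $\sigma=\tau$; (iv) for all $\sigma,\tau\in\{0,1\}^n$, $f_\sigma(\alpha_n(\tau))=0$ iff $\sigma=\tau$. *)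

theory Defs
  imports Complex_Main
begin

text \<open>Words sigma in {0,1}^n are bool lists of length n (False = 0, True = 1),
  with hd sigma = sigma_1. The composition f_sigma applies f_{sigma_1} first:
  f_sigma = f_{sigma_n} o ... o f_{sigma_1}.\<close>

fun fword :: "(real \<Rightarrow> real) \<Rightarrow> (real \<Rightarrow> real) \<Rightarrow> bool list \<Rightarrow> real \<Rightarrow> real" where
  "fword f0 f1 [] = id"
| "fword f0 f1 (b # s) = fword f0 f1 s \<circ> (if b then f1 else f0)"

end

theory Submission
  imports Defs
begin

context
  fixes f0 f1 :: "real \<Rightarrow> real"
  assumes b0: "bij_betw f0 {0..1/3} {0..1}"
    and b1: "bij_betw f1 {2/3..1} {0..1}"
    and a0: "\<And>x. x \<le> 0 \<or> x \<ge> 2/3 \<Longrightarrow> \<bar>f0 x\<bar> \<ge> 1"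
    and a1: "\<And>x. x \<le> 1/3 \<or> x \<ge> 1 \<Longrightarrow> \<bar>f1 x\<bar> \<ge> 1"
begin

definition gg :: "bool \<Rightarrow> real \<Rightarrow> real" where
  "gg b y = (if b then the_inv_into {2/3..1} f1 y else the_inv_into {0..1/3} f0 y)"

fun alp :: "bool list \<Rightarrow> real" where
  "alp [] = 0"
| "alp (b # s) = gg b (alp s)"

definition ff :: "bool \<Rightarrow> real \<Rightarrow> real" where
  "ff b = (if b then f1 else f0)"

lemma gg_props:
  assumes "y \<in> {0..1}"
  shows "ff b (gg b y) = y" "\<not> b \<Longrightarrow> gg b y \<in> {0..1/3}" "b \<Longrightarrow> gg b y \<in> {2/3..1}"
proof -
  have i0: "the_inv_into {0..1/3} f0 y \<in> {0..1/3}"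
    using bij_betw_apply[OF bij_betw_the_inv_into[OF b0]] assms by blast
  have i1: "the_inv_into {2/3..1} f1 y \<in> {2/3..1}"
    using bij_betw_apply[OF bij_betw_the_inv_into[OF b1]] assms by blast
  show "ff b (gg b y) = y" using assms b0 b1
    by (simp add: gg_def ff_def f_the_inv_into_f_bij_betw)
  show "\<not> b \<Longrightarrow> gg b y \<in> {0..1/3}" using i0 by (simp add: gg_def)
  show "b \<Longrightarrow> gg b y \<in> {2/3..1}" using i1 by (simp add: gg_def)
qed

lemma gg_open:
  assumes "y \<in> {0..<1}"
  shows "gg b y \<in> {0<..<1}"
proof (cases b)
  case True
  have r: "gg b y \<in> {2/3..1}" "f1 (gg b y) = y" using gg_props[of y b] assms True by (auto simp: ff_def)
  have "gg b y \<noteq> 1" using a1[of 1] r assms by auto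
  then show ?thesis using r by auto
next
  case False
  have r: "gg b y \<in> {0..1/3}" "f0 (gg b y) = y" using gg_props[of y b] assms False by (auto simp: ff_def)
  have "gg b y \<noteq> 0" using a0[of 0] r assms by auto
  then show ?thesis using r by auto
qed

lemma alp_range: "alp s \<in> {0..<1} \<and> (s \<noteq> [] \<longrightarrow> alp s \<in> {0<..<1})"
proof (induction s)
  case Nil then show ?case by simp
next
  case (Cons b s)
  then have "alp (b # s) \<in> {0<..<1}" using gg_open by auto
  then show ?case by auto
qed

lemma escape: "\<bar>x\<bar> \<ge> 1 \<Longrightarrow> \<bar>fword f0 f1 s x\<bar> \<ge> 1"
proof (induction s arbitrary: x)
  case Nil then show ?case by simp
next
  case (Cons b s)
  have "\<bar>(if b then f1 else f0) x\<bar> \<ge> 1"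
    using Cons.prems a0[of x] a1[of x] by (cases b) (auto simp: abs_if split: if_splits)
  then show ?case using Cons.IH by simp
qed

lemma key: "length \<sigma> = length \<tau> \<Longrightarrow> (fword f0 f1 \<sigma> (alp \<tau>) = 0 \<longleftrightarrow> \<sigma> = \<tau>)"
proof (induction \<sigma> arbitrary: \<tau>)
  case Nil then show ?case by simp
next
  case (Cons b s)
  then obtain c t where tt: "\<tau> = c # t" and lt: "length s = length t" by (cases \<tau>) auto
  have y: "alp t \<in> {0..1}" using alp_range[of t] by auto
  have eq: "fword f0 f1 (b # s) (alp \<tau>) = fword f0 f1 s (ff b (gg c (alp t)))"
    by (simp add: tt ff_def)
  show ?case
  proof (cases "b = c")
    case True
    then show ?thesis using eq gg_props(1)[OF y] Cons.IH[OF lt] tt by simp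
  next
    case False
    have "\<bar>ff b (gg c (alp t))\<bar> \<ge> 1"
    proof (cases c)
      case True
      then have "gg c (alp t) \<ge> 2/3" using gg_props(3)[OF y] by auto
      then show ?thesis using a0 False True by (simp add: ff_def)
    next
      case F: False
      then have "gg c (alp t) \<le> 1/3" using gg_props(2)[OF y] by auto
      then show ?thesis using a1 False F by (simp add: ff_def)
    qed
    then have "\<bar>fword f0 f1 s (ff b (gg c (alp t)))\<bar> \<ge> 1" by (rule escape)
    then have "fword f0 f1 (b # s) (alp \<tau>) \<noteq> 0" using eq by auto
    then show ?thesis using False tt by simp
  qed
qed

end

theorem lemma2:
  fixes f0 f1 :: "real \<Rightarrow> real" and n :: nat
  assumes "bij_betw f0 {0..1/3} {0..1}"
    and "bij_betw f1 {2/3..1} {0..1}"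
    and "\<And>x. x \<le> 0 \<or> x \<ge> 2/3 \<Longrightarrow> \<bar>f0 x\<bar> \<ge> 1"
    and "\<And>x. x \<le> 1/3 \<or> x \<ge> 1 \<Longrightarrow> \<bar>f1 x\<bar> \<ge> 1"
    and "n \<ge> 1"
  shows "\<exists>\<alpha> :: bool list \<Rightarrow> real.
           (\<forall>\<sigma>. length \<sigma> = n \<longrightarrow> \<alpha> \<sigma> \<in> {0<..<1}) \<and>
           (\<forall>\<sigma>. length \<sigma> = n \<longrightarrow> \<not> hd \<sigma> \<longrightarrow> \<alpha> \<sigma> \<in> {0..1/3}) \<and>
           (\<forall>\<sigma>. length \<sigma> = n \<longrightarrow> hd \<sigma> \<longrightarrow> \<alpha> \<sigma> \<in> {2/3..1}) \<and>
           (\<forall>\<sigma> \<tau>. length \<sigma> = n \<longrightarrow> length \<tau> = n \<longrightarrow> (\<alpha> \<sigma> = \<alpha> \<tau> \<longleftrightarrow> \<sigma> = \<tau>)) \<and>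
           (\<forall>\<sigma> \<tau>. length \<sigma> = n \<longrightarrow> length \<tau> = n \<longrightarrow> (fword f0 f1 \<sigma> (\<alpha> \<tau>) = 0 \<longleftrightarrow> \<sigma> = \<tau>))"
proof (intro exI conjI allI impI)
  let ?a = "alp f0 f1"
  note K = key[OF assms(1-4)]
  note R = alp_range[OF assms(1-4)]
  fix \<sigma> :: "bool list" assume l: "length \<sigma> = n"
  then obtain b s where s: "\<sigma> = b # s" using assms(5) by (cases \<sigma>) auto
  have y: "?a s \<in> {0..1}" using R[of s] by auto
  show "?a \<sigma> \<in> {0<..<1}" using R[of \<sigma>] s by auto
  { assume "\<not> hd \<sigma>" then show "?a \<sigma> \<in> {0..1/3}"
      using gg_props(2)[OF assms(1-4) y, of b] s alp.simps(2)[OF assms(1-4)] by simp }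
  { assume "hd \<sigma>" then show "?a \<sigma> \<in> {2/3..1}"
      using gg_props(3)[OF assms(1-4) y, of b] s alp.simps(2)[OF assms(1-4)] by simp }
next
  fix \<sigma> \<tau> :: "bool list"
  assume l: "length \<sigma> = n" "length \<tau> = n"
  note K = key[OF assms(1-4)]
  show "fword f0 f1 \<sigma> (alp f0 f1 \<tau>) = 0 \<longleftrightarrow> \<sigma> = \<tau>" using K l by simp
  show "alp f0 f1 \<sigma> = alp f0 f1 \<tau> \<longleftrightarrow> \<sigma> = \<tau>"
    using K[of \<sigma> \<sigma>] K[of \<sigma> \<tau>] l by auto
qed

end
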